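(* For regular spaces $X$, the following properties are pairwise equivalent: DCCC; selectively $3$-star-ccc; selectively $\omega$-star-ccc; weakly star-Lindelöf; weakly $\omega$-star-Lindelöf; weakly strongly $2$-star-Lindelöf; weakly strongly $\omega$-star-Lindelöf; $2$-star-Lindelöf; $\omega$-star-Lindelöf; strongly $3$-star-Lindelöf; strongly $\omega$-star-Lindelöf (and hence so is every property that is implied by one of these and implies another of these).
   Context: For $B\subseteq X$ and a family $\mathcal{U}$ of subsets of $X$: $\operatorname{st}^1(B,\mathcal{U})=\bigcup\{U\in\mathcal{U}:U\cap B\neq\emptyset\}$, $\operatorname{st}^{n+1}(B,\mathcal{U})=\bigcup\{U\in\mathcal{U}:U\cap\operatorname{st}^n(B,\mathcal{U})\neq\emptyset\}$. DCCC: every discrete family of open sets is countable. For $k\in\mathbb{N}^+$: $X$ is $k$-star-Lindelöf (resp. strongly $k$-star-Lindelöf) if every open cover $\mathcal{U}$ admits a countable $\mathcal{V}\subseteq\mathcal{U}$ (resp. countable $B\subseteq X$) with $\operatorname{st}^k(\bigcup\mathcal{V},\mathcal{U})=X$ (resp. $\operatorname{st}^k(B,\mathcal{U})=X$); weakly $k$-star-Lindelöf (resp. weakly strongly $k$-star-Lindelöf) is the same with the conclusion replaced by density: $\overline{\operatorname{st}^k(\bigcup\mathcal{V},\mathcal{U})}=X$ (resp. $\overline{\operatorname{st}^k(B,\mathcal{U})}=X$). The $\omega$-versions ($\omega$-star-Lindelöf, strongly $\omega$-star-Lindelöf, weakly $\omega$-star-Lindelöf, weakly strongly $\omega$-star-Lindelöf)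 are defined the same way except that for each open cover one only requires some $k\in\mathbb{N}^+$ (depending on the cover) together with the countable $\mathcal{V}$ or $B$. "Weakly star-Lindelöf" means weakly $1$-star-Lindelöf. $X$ is selectively $k$-star-ccc if for every open cover $\mathcal{U}$ and every sequence $(\mathcal{A}_n:n\in\omega)$ of maximal pairwise disjoint families of open sets there is $(A_n\in\mathcal{A}_n:n\in\omega)$ with $\operatorname{st}^k(\bigcup_n A_n,\mathcal{U})=X$; selectively $\omega$-star-ccc is the same but with some $k\in\mathbb{N}^+$ (depending on $\mathcal{U}$ and the sequence) allowed. *)

theory Defs
  imports "HOL-Analysis.Analysis"
begin

fun stk :: "nat \<Rightarrow> 'a set \<Rightarrow> 'a set set \<Rightarrow> 'a set" where
  "stk 0 B \<U> = B"
| "stk (Suc n) B \<U> = \<Union>{U \<in> \<U>. U \<inter> stk n B \<U> \<noteq> {}}"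

definition open_cover :: "'a topology \<Rightarrow> 'a set set \<Rightarrow> bool" where
  "open_cover X \<U> \<longleftrightarrow> (\<forall>U\<in>\<U>. openin X U) \<and> \<Union>\<U> = topspace X"

definition discrete_family :: "'a topology \<Rightarrow> 'a set set \<Rightarrow> bool" where
  "discrete_family X \<A> \<longleftrightarrow>
     (\<forall>x\<in>topspace X. \<exists>W. openin X W \<and> x \<in> W \<and>
        (\<forall>A1\<in>\<A>. \<forall>A2\<in>\<A>. A1 \<inter> W \<noteq> {} \<longrightarrow> A2 \<inter> W \<noteq> {} \<longrightarrow> A1 = A2))"

definition DCCC :: "'a topology \<Rightarrow> bool" where
  "DCCC X \<longleftrightarrow> (\<forall>\<A>. (\<forall>A\<in>\<A>. openin X A) \<and> discrete_family X \<A> \<longrightarrow> countable \<A>)"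

definition k_star_lindelof :: "nat \<Rightarrow> 'a topology \<Rightarrow> bool" where
  "k_star_lindelof k X \<longleftrightarrow> (\<forall>\<U>. open_cover X \<U> \<longrightarrow>
     (\<exists>\<V>. \<V> \<subseteq> \<U> \<and> countable \<V> \<and> stk k (\<Union>\<V>) \<U> = topspace X))"

definition strongly_k_star_lindelof :: "nat \<Rightarrow> 'a topology \<Rightarrow> bool" where
  "strongly_k_star_lindelof k X \<longleftrightarrow> (\<forall>\<U>. open_cover X \<U> \<longrightarrow>
     (\<exists>B. B \<subseteq> topspace X \<and> countable B \<and> stk k B \<U> = topspace X))"

definition weakly_k_star_lindelof :: "nat \<Rightarrow> 'a topology \<Rightarrow> bool" where
  "weakly_k_star_lindelof k X \<longleftrightarrow> (\<forall>\<U>. open_cover X \<U> \<longrightarrow>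
     (\<exists>\<V>. \<V> \<subseteq> \<U> \<and> countable \<V> \<and> X closure_of (stk k (\<Union>\<V>) \<U>) = topspace X))"

definition weakly_strongly_k_star_lindelof :: "nat \<Rightarrow> 'a topology \<Rightarrow> bool" where
  "weakly_strongly_k_star_lindelof k X \<longleftrightarrow> (\<forall>\<U>. open_cover X \<U> \<longrightarrow>
     (\<exists>B. B \<subseteq> topspace X \<and> countable B \<and> X closure_of (stk k B \<U>) = topspace X))"

definition omega_star_lindelof :: "'a topology \<Rightarrow> bool" where
  "omega_star_lindelof X \<longleftrightarrow> (\<forall>\<U>. open_cover X \<U> \<longrightarrow>
     (\<exists>k\<ge>1. \<exists>\<V>. \<V> \<subseteq> \<U> \<and> countable \<V> \<and> stk k (\<Union>\<V>) \<U> = topspace X))"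

definition strongly_omega_star_lindelof :: "'a topology \<Rightarrow> bool" where
  "strongly_omega_star_lindelof X \<longleftrightarrow> (\<forall>\<U>. open_cover X \<U> \<longrightarrow>
     (\<exists>k\<ge>1. \<exists>B. B \<subseteq> topspace X \<and> countable B \<and> stk k B \<U> = topspace X))"

definition weakly_omega_star_lindelof :: "'a topology \<Rightarrow> bool" where
  "weakly_omega_star_lindelof X \<longleftrightarrow> (\<forall>\<U>. open_cover X \<U> \<longrightarrow>
     (\<exists>k\<ge>1. \<exists>\<V>. \<V> \<subseteq> \<U> \<and> countable \<V> \<and> X closure_of (stk k (\<Union>\<V>) \<U>) = topspace X))"

definition weakly_strongly_omega_star_lindelof :: "'a topology \<Rightarrow> bool" where
  "weakly_strongly_omega_star_lindelof X \<longleftrightarrow> (\<forall>\<U>. open_cover X \<U> \<longrightarrow>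
     (\<exists>k\<ge>1. \<exists>B. B \<subseteq> topspace X \<and> countable B \<and> X closure_of (stk k B \<U>) = topspace X))"

definition disjoint_open_family :: "'a topology \<Rightarrow> 'a set set \<Rightarrow> bool" where
  "disjoint_open_family X \<A> \<longleftrightarrow> (\<forall>A\<in>\<A>. openin X A) \<and> pairwise disjnt \<A>"

definition maximal_disjoint_open_family :: "'a topology \<Rightarrow> 'a set set \<Rightarrow> bool" where
  "maximal_disjoint_open_family X \<A> \<longleftrightarrow> disjoint_open_family X \<A> \<and>
     (\<forall>\<B>. disjoint_open_family X \<B> \<and> \<A> \<subseteq> \<B> \<longrightarrow> \<B> = \<A>)"

definition selectively_k_star_ccc :: "nat \<Rightarrow> 'a topology \<Rightarrow> bool" where
  "selectively_k_star_ccc k X \<longleftrightarrow> (\<forall>\<U> \<A>. open_cover X \<U> \<and>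
     (\<forall>n::nat. maximal_disjoint_open_family X (\<A> n)) \<longrightarrow>
     (\<exists>A. (\<forall>n. A n \<in> \<A> n) \<and> stk k (\<Union>n. A n) \<U> = topspace X))"

definition selectively_omega_star_ccc :: "'a topology \<Rightarrow> bool" where
  "selectively_omega_star_ccc X \<longleftrightarrow> (\<forall>\<U> \<A>. open_cover X \<U> \<and>
     (\<forall>n::nat. maximal_disjoint_open_family X (\<A> n)) \<longrightarrow>
     (\<exists>k\<ge>1. \<exists>A. (\<forall>n. A n \<in> \<A> n) \<and> stk k (\<Union>n. A n) \<U> = topspace X))"

end

theory Submission
  imports Defs
begin


lemma stk_mono: "B \<subseteq> B' \<Longrightarrow> stk n B U \<subseteq> stk n B' U"
  by (induction n) auto

lemma stk_comp: "stk n (stk m B U) U = stk (n+m) B U"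
  by (induction n) auto

lemma stk_sub: "open_cover X U \<Longrightarrow> stk (Suc n) B U \<subseteq> topspace X"
  unfolding open_cover_def by auto

lemma stk_one_sub: "B \<subseteq> \<Union>U \<Longrightarrow> B \<subseteq> stk n B U"
proof (induction n)
  case 0 then show ?case by auto
next
  case (Suc n)
  show ?case
  proof
    fix x assume "x \<in> B"
    then obtain V where "V \<in> U" "x \<in> V" using Suc.prems by auto
    moreover have "x \<in> stk n B U" using Suc \<open>x \<in> B\<close> by auto
    ultimately show "x \<in> stk (Suc n) B U" by auto
  qed
qed

lemma pairwise_maximal:
  assumes sym: "\<And>x y. R x y \<Longrightarrow> R y x"
  shows "\<exists>M \<subseteq> S. pairwise R M \<and> (\<forall>x\<in>S. x \<notin> M \<longrightarrow> (\<exists>y\<in>M. \<not> R x y))"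
proof -
  let ?A = "{M. M \<subseteq> S \<and> pairwise R M}"
  have "\<exists>M\<in>?A. \<forall>X\<in>?A. M \<subseteq> X \<longrightarrow> X = M"
  proof (rule subset_Zorn')
    fix C assume ch: "subset.chain ?A C"
    have CA: "C \<subseteq> ?A" using ch unfolding subset.chain_def by simp
    have lin: "\<forall>x\<in>C. \<forall>y\<in>C. x \<subset> y \<or> x = y \<or> y \<subset> x \<or> y = x"
      using ch unfolding subset.chain_def by simp
    have "\<Union>C \<subseteq> S" using CA by auto
    moreover have "pairwise R (\<Union>C)"
      unfolding pairwise_def
    proof (intro ballI impI)
      fix x y assume "x \<in> \<Union>C" "y \<in> \<Union>C" "x \<noteq> y"
      then obtain M1 M2 where m: "M1 \<in> C" "M2 \<in> C" "x \<in> M1" "y \<in> M2" by auto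
      have "M1 \<subseteq> M2 \<or> M2 \<subseteq> M1"
        using lin m(1,2) by (metis less_imp_le order_refl)
      moreover have "pairwise R M1" "pairwise R M2"
        using m(1,2) CA by auto
      ultimately show "R x y" using m(3,4) \<open>x \<noteq> y\<close> unfolding pairwise_def by auto
    qed
    ultimately show "\<Union>C \<in> ?A" by simp
  qed
  then obtain M where M0: "M \<in> ?A" and mx: "\<forall>X\<in>?A. M \<subseteq> X \<longrightarrow> X = M" by (rule bexE)
  from M0 have M: "M \<subseteq> S" "pairwise R M" by auto
  have "\<exists>y\<in>M. \<not> R x y" if "x \<in> S" "x \<notin> M" for x
  proof (rule ccontr)
    assume "\<not> ?thesis"
    then have a: "\<forall>y\<in>M. R x y" by blast
    then have b: "\<forall>y\<in>M. R y x" using sym by blast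
    have "pairwise R (insert x M)" using M(2) a b unfolding pairwise_def by auto
    then have "insert x M = M" proof -
      have "insert x M \<in> ?A" using \<open>pairwise R (insert x M)\<close> M that by auto
      then show ?thesis using mx by blast
    qed
    then show False using that by blast
  qed
  then show ?thesis using M by blast
qed

lemma stk_step: "U \<in> \<U> \<Longrightarrow> U \<inter> stk n B \<U> \<noteq> {} \<Longrightarrow> U \<subseteq> stk (Suc n) B \<U>"
  by auto

lemma cover_pt: "open_cover X \<U> \<Longrightarrow> x \<in> topspace X \<Longrightarrow> \<exists>U\<in>\<U>. x \<in> U"
  unfolding open_cover_def by auto

lemma dccc_core:
  assumes D: "DCCC X" and C: "open_cover X \<U>"
  shows "\<exists>M. countable M \<and> (\<forall>W\<in>M. openin X W \<and> W \<noteq> {} \<and> (\<exists>U\<in>\<U>. W \<subseteq> U)) \<and>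
    (\<forall>G. openin X G \<and> G \<noteq> {} \<and> (\<exists>U\<in>\<U>. G \<subseteq> U) \<longrightarrow>
        (\<exists>W\<in>M. \<exists>U\<in>\<U>. U \<inter> G \<noteq> {} \<and> U \<inter> W \<noteq> {}))"
proof -
  let ?S = "{G. openin X G \<and> G \<noteq> {} \<and> (\<exists>U\<in>\<U>. G \<subseteq> U)}"
  let ?R = "\<lambda>W W'. \<not> (\<exists>U\<in>\<U>. U \<inter> W \<noteq> {} \<and> U \<inter> W' \<noteq> {})"
  have "\<exists>M \<subseteq> ?S. pairwise ?R M \<and> (\<forall>x\<in>?S. x \<notin> M \<longrightarrow> (\<exists>y\<in>M. \<not> ?R x y))"
    by (rule pairwise_maximal) blast
  then obtain M where MS: "M \<subseteq> ?S" and pw: "pairwise ?R M"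
    and mx: "\<forall>x\<in>?S. x \<notin> M \<longrightarrow> (\<exists>y\<in>M. \<not> ?R x y)" by blast
  have disc: "discrete_family X M"
    unfolding discrete_family_def
  proof
    fix x assume "x \<in> topspace X"
    then obtain U where U: "U \<in> \<U>" "x \<in> U" using cover_pt[OF C] by blast
    have "openin X U" using C U unfolding open_cover_def by auto
    moreover have "\<forall>A1\<in>M. \<forall>A2\<in>M. A1 \<inter> U \<noteq> {} \<longrightarrow> A2 \<inter> U \<noteq> {} \<longrightarrow> A1 = A2"
    proof (intro ballI impI)
      fix A1 A2 assume "A1 \<in> M" "A2 \<in> M" "A1 \<inter> U \<noteq> {}" "A2 \<inter> U \<noteq> {}"
      show "A1 = A2"
      proof (rule ccontr)
        assume "A1 \<noteq> A2"
        then have "?R A1 A2" using pw \<open>A1 \<in> M\<close> \<open>A2 \<in> M\<close> unfolding pairwise_def by blast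
        then show False using U(1) \<open>A1 \<inter> U \<noteq> {}\<close> \<open>A2 \<inter> U \<noteq> {}\<close> by blast
      qed
    qed
    ultimately show "\<exists>W. openin X W \<and> x \<in> W \<and>
        (\<forall>A1\<in>M. \<forall>A2\<in>M. A1 \<inter> W \<noteq> {} \<longrightarrow> A2 \<inter> W \<noteq> {} \<longrightarrow> A1 = A2)" using U by blast
  qed
  have MS': "\<forall>W\<in>M. openin X W \<and> W \<noteq> {} \<and> (\<exists>U\<in>\<U>. W \<subseteq> U)" using MS by auto
  have "\<forall>A\<in>M. openin X A" using MS' by auto
  moreover have "\<And>\<A>. (\<forall>A\<in>\<A>. openin X A) \<and> discrete_family X \<A> \<Longrightarrow> countable \<A>"
    using D unfolding DCCC_def by blast
  ultimately have "countable M" using disc by blast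
  moreover have "\<exists>W\<in>M. \<exists>U\<in>\<U>. U \<inter> G \<noteq> {} \<and> U \<inter> W \<noteq> {}"
    if G: "openin X G" "G \<noteq> {}" "\<exists>U\<in>\<U>. G \<subseteq> U" for G
  proof (cases "G \<in> M")
    case True
    then show ?thesis using G by blast
  next
    case False
    have "G \<in> ?S" using G by blast
    then obtain y where "y \<in> M" "\<not> ?R G y" using mx False by blast
    then show ?thesis by blast
  qed
  ultimately show ?thesis using MS' by (intro exI[of _ M]) auto
qed

lemma open_cover_open: "open_cover X \<U> \<Longrightarrow> U \<in> \<U> \<Longrightarrow> openin X U"
  unfolding open_cover_def by auto

lemma dccc_2L:
  assumes D: "DCCC X" shows "k_star_lindelof 2 X"
  unfolding k_star_lindelof_def
proof (intro allI impI)
  fix \<U> assume C: "open_cover X \<U>"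
  obtain M where Mc: "countable M" and MS: "\<forall>W\<in>M. openin X W \<and> W \<noteq> {} \<and> (\<exists>U\<in>\<U>. W \<subseteq> U)"
    and mx: "\<forall>G. openin X G \<and> G \<noteq> {} \<and> (\<exists>U\<in>\<U>. G \<subseteq> U) \<longrightarrow>
        (\<exists>W\<in>M. \<exists>U\<in>\<U>. U \<inter> G \<noteq> {} \<and> U \<inter> W \<noteq> {})"
    using dccc_core[OF D C] by (elim exE conjE) blast
  define f where "f W = (SOME U. U \<in> \<U> \<and> W \<subseteq> U)" for W
  have f: "f W \<in> \<U> \<and> W \<subseteq> f W" if "W \<in> M" for W
    using MS that unfolding f_def by (metis (mono_tags, lifting) someI)
  let ?V = "f ` M"
  have "?V \<subseteq> \<U>" using f by blast
  moreover have "countable ?V" using Mc by simp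
  moreover have "stk (Suc (Suc 0)) (\<Union>?V) \<U> = topspace X"
  proof
    show "stk (Suc (Suc 0)) (\<Union>?V) \<U> \<subseteq> topspace X" by (rule stk_sub[OF C])
    show "topspace X \<subseteq> stk (Suc (Suc 0)) (\<Union>?V) \<U>"
    proof
      fix x assume "x \<in> topspace X"
      then obtain U where U: "U \<in> \<U>" "x \<in> U" using cover_pt[OF C] by blast
      then obtain W U' where W: "W \<in> M" "U' \<in> \<U>" "U' \<inter> U \<noteq> {}" "U' \<inter> W \<noteq> {}"
        using mx open_cover_open[OF C U(1)] by blast
      have "W \<subseteq> \<Union>?V" using f W(1) by blast
      then have "U' \<inter> stk 0 (\<Union>?V) \<U> \<noteq> {}" using W by auto
      then have "U' \<subseteq> stk (Suc 0) (\<Union>?V) \<U>" using stk_step W(2) by blast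
      then have "U \<inter> stk (Suc 0) (\<Union>?V) \<U> \<noteq> {}" using W by auto
      then have "U \<subseteq> stk (Suc (Suc 0)) (\<Union>?V) \<U>" using stk_step U(1) by blast
      then show "x \<in> stk (Suc (Suc 0)) (\<Union>?V) \<U>" using U by blast
    qed
  qed
  ultimately show "\<exists>\<V>\<subseteq>\<U>. countable \<V> \<and> stk 2 (\<Union>\<V>) \<U> = topspace X"
    by (metis numeral_2_eq_2)
qed

lemma dccc_w1:
  assumes D: "DCCC X" shows "weakly_k_star_lindelof 1 X"
  unfolding weakly_k_star_lindelof_def
proof (intro allI impI)
  fix \<U> assume C: "open_cover X \<U>"
  obtain M where Mc: "countable M" and MS: "\<forall>W\<in>M. openin X W \<and> W \<noteq> {} \<and> (\<exists>U\<in>\<U>. W \<subseteq> U)"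
    and mx: "\<forall>G. openin X G \<and> G \<noteq> {} \<and> (\<exists>U\<in>\<U>. G \<subseteq> U) \<longrightarrow>
        (\<exists>W\<in>M. \<exists>U\<in>\<U>. U \<inter> G \<noteq> {} \<and> U \<inter> W \<noteq> {})"
    using dccc_core[OF D C] by (elim exE conjE) blast
  define f where "f W = (SOME U. U \<in> \<U> \<and> W \<subseteq> U)" for W
  have f: "f W \<in> \<U> \<and> W \<subseteq> f W" if "W \<in> M" for W
    using MS that unfolding f_def by (metis (mono_tags, lifting) someI)
  let ?V = "f ` M"
  have "?V \<subseteq> \<U>" using f by blast
  moreover have "countable ?V" using Mc by simp
  moreover have "X closure_of stk (Suc 0) (\<Union>?V) \<U> = topspace X"
  proof
    show "X closure_of stk (Suc 0) (\<Union>?V) \<U> \<subseteq> topspace X" by (rule closure_of_subset_topspace)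
    show "topspace X \<subseteq> X closure_of stk (Suc 0) (\<Union>?V) \<U>"
    proof
      fix x assume x: "x \<in> topspace X"
      show "x \<in> X closure_of stk (Suc 0) (\<Union>?V) \<U>"
        unfolding in_closure_of
      proof (intro conjI x allI impI)
        fix T assume T: "x \<in> T \<and> openin X T"
        obtain U where U: "U \<in> \<U>" "x \<in> U" using cover_pt[OF C x] by blast
        have "openin X (T \<inter> U)" using T open_cover_open[OF C U(1)] by auto
        moreover have "T \<inter> U \<noteq> {}" using T U by auto
        ultimately obtain W U' where W: "W \<in> M" "U' \<in> \<U>" "U' \<inter> (T \<inter> U) \<noteq> {}" "U' \<inter> W \<noteq> {}"
          using mx U by blast
        have "W \<subseteq> \<Union>?V" using f W(1) by blast
        then have "U' \<inter> stk 0 (\<Union>?V) \<U> \<noteq> {}" using W by auto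
        then have "U' \<subseteq> stk (Suc 0) (\<Union>?V) \<U>" using stk_step W(2) by blast
        then show "\<exists>y. y \<in> stk (Suc 0) (\<Union>?V) \<U> \<and> y \<in> T" using W(3) by blast
      qed
    qed
  qed
  ultimately show "\<exists>\<V>\<subseteq>\<U>. countable \<V> \<and> X closure_of stk 1 (\<Union>\<V>) \<U> = topspace X"
    by (metis One_nat_def)
qed

lemma oL_wo: "omega_star_lindelof X \<Longrightarrow> weakly_omega_star_lindelof X"
  unfolding omega_star_lindelof_def weakly_omega_star_lindelof_def
  by (metis closure_of_topspace)

lemma kL_oL: "k \<ge> 1 \<Longrightarrow> k_star_lindelof k X \<Longrightarrow> omega_star_lindelof X"
  unfolding omega_star_lindelof_def k_star_lindelof_def by blast

lemma wk_wo: "k \<ge> 1 \<Longrightarrow> weakly_k_star_lindelof k X \<Longrightarrow> weakly_omega_star_lindelof X"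
  unfolding weakly_omega_star_lindelof_def weakly_k_star_lindelof_def by blast

lemma sk_so: "k \<ge> 1 \<Longrightarrow> strongly_k_star_lindelof k X \<Longrightarrow> strongly_omega_star_lindelof X"
  unfolding strongly_omega_star_lindelof_def strongly_k_star_lindelof_def by blast

lemma wsk_wso: "k \<ge> 1 \<Longrightarrow> weakly_strongly_k_star_lindelof k X \<Longrightarrow> weakly_strongly_omega_star_lindelof X"
  unfolding weakly_strongly_omega_star_lindelof_def weakly_strongly_k_star_lindelof_def by blast

lemma selk_selo: "k \<ge> 1 \<Longrightarrow> selectively_k_star_ccc k X \<Longrightarrow> selectively_omega_star_ccc X"
  unfolding selectively_omega_star_ccc_def selectively_k_star_ccc_def by blast

lemma points_to_sets:
  assumes C: "open_cover X \<U>" and B: "B \<subseteq> topspace X" "countable B"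
  shows "\<exists>\<V>\<subseteq>\<U>. countable \<V> \<and> B \<subseteq> \<Union>\<V>"
proof -
  define f where "f b = (SOME U. U \<in> \<U> \<and> b \<in> U)" for b
  have f: "f b \<in> \<U> \<and> b \<in> f b" if "b \<in> B" for b
    using cover_pt[OF C] B that unfolding f_def by (metis (mono_tags, lifting) someI subsetD)
  show ?thesis using f B by (intro exI[of _ "f ` B"]) auto
qed

lemma sets_to_points:
  assumes C: "open_cover X \<U>" and V: "\<V> \<subseteq> \<U>" "countable \<V>"
  shows "\<exists>B. B \<subseteq> topspace X \<and> countable B \<and> \<Union>\<V> \<subseteq> stk (Suc 0) B \<U>"
proof -
  define f where "f V = (SOME x. x \<in> V)" for V :: "'a set"
  let ?B = "f ` (\<V> - {{}})"
  have fx: "f V \<in> V" if "V \<noteq> {}" for V using that unfolding f_def by (simp add: some_in_eq)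
  have "?B \<subseteq> \<Union>\<V>" using fx by auto
  also have "\<dots> \<subseteq> \<Union>\<U>" using V(1) by (rule Sup_subset_mono)
  finally have "?B \<subseteq> topspace X" using C unfolding open_cover_def by simp
  moreover have "countable ?B" using V by simp
  moreover have "\<Union>\<V> \<subseteq> stk (Suc 0) ?B \<U>"
  proof
    fix x assume "x \<in> \<Union>\<V>"
    then obtain V0 where "V0 \<in> \<V>" "x \<in> V0" by blast
    then have "f V0 \<in> V0 \<inter> ?B" using fx by blast
    then show "x \<in> stk (Suc 0) ?B \<U>" using \<open>V0 \<in> \<V>\<close> \<open>x \<in> V0\<close> V by auto
  qed
  ultimately show ?thesis by blast
qed

lemma sk_kL: "strongly_k_star_lindelof k X \<Longrightarrow> k_star_lindelof k X"
  unfolding strongly_k_star_lindelof_def k_star_lindelof_def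
proof (intro allI impI)
  fix \<U> assume H: "\<forall>\<U>. open_cover X \<U> \<longrightarrow> (\<exists>B\<subseteq>topspace X. countable B \<and> stk k B \<U> = topspace X)"
    and C: "open_cover X \<U>"
  obtain B where B: "B \<subseteq> topspace X" "countable B" "stk k B \<U> = topspace X" using H C by blast
  obtain \<V> where V: "\<V> \<subseteq> \<U>" "countable \<V>" "B \<subseteq> \<Union>\<V>" using points_to_sets[OF C B(1,2)] by blast
  have "stk k B \<U> \<subseteq> stk k (\<Union>\<V>) \<U>" by (rule stk_mono[OF V(3)])
  moreover have "stk k (\<Union>\<V>) \<U> \<subseteq> topspace X"
  proof (cases k)
    case 0 then show ?thesis using Sup_subset_mono[OF V(1)] C unfolding open_cover_def by simp
  next
    case (Suc n) then show ?thesis using stk_sub[OF C] by simp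
  qed
  ultimately have "stk k (\<Union>\<V>) \<U> = topspace X" using B(3) by simp
  then show "\<exists>\<V>\<subseteq>\<U>. countable \<V> \<and> stk k (\<Union>\<V>) \<U> = topspace X" using V(1,2) by blast
qed

lemma so_oL: "strongly_omega_star_lindelof X \<Longrightarrow> omega_star_lindelof X"
  unfolding strongly_omega_star_lindelof_def omega_star_lindelof_def
proof (intro allI impI)
  fix \<U> assume H: "\<forall>\<U>. open_cover X \<U> \<longrightarrow> (\<exists>k\<ge>1. \<exists>B\<subseteq>topspace X. countable B \<and> stk k B \<U> = topspace X)"
    and C: "open_cover X \<U>"
  obtain k B where B: "k \<ge> 1" "B \<subseteq> topspace X" "countable B" "stk k B \<U> = topspace X" using H C by blast
  obtain \<V> where V: "\<V> \<subseteq> \<U>" "countable \<V>" "B \<subseteq> \<Union>\<V>" using points_to_sets[OF C B(2,3)] by blast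
  have "stk k B \<U> \<subseteq> stk k (\<Union>\<V>) \<U>" by (rule stk_mono[OF V(3)])
  moreover have "stk k (\<Union>\<V>) \<U> \<subseteq> topspace X"
    using stk_sub[OF C, of "k - 1"] B(1) by simp
  ultimately have "stk k (\<Union>\<V>) \<U> = topspace X" using B(4) by simp
  then show "\<exists>k\<ge>1. \<exists>\<V>\<subseteq>\<U>. countable \<V> \<and> stk k (\<Union>\<V>) \<U> = topspace X" using V(1,2) B(1) by blast
qed

lemma wso_wo: "weakly_strongly_omega_star_lindelof X \<Longrightarrow> weakly_omega_star_lindelof X"
  unfolding weakly_strongly_omega_star_lindelof_def weakly_omega_star_lindelof_def
proof (intro allI impI)
  fix \<U> assume H: "\<forall>\<U>. open_cover X \<U> \<longrightarrow> (\<exists>k\<ge>1. \<exists>B\<subseteq>topspace X. countable B \<and> X closure_of stk k B \<U> = topspace X)"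
    and C: "open_cover X \<U>"
  obtain k B where B: "k \<ge> 1" "B \<subseteq> topspace X" "countable B" "X closure_of stk k B \<U> = topspace X" using H C by blast
  obtain \<V> where V: "\<V> \<subseteq> \<U>" "countable \<V>" "B \<subseteq> \<Union>\<V>" using points_to_sets[OF C B(2,3)] by blast
  have "X closure_of stk k B \<U> \<subseteq> X closure_of stk k (\<Union>\<V>) \<U>" by (rule closure_of_mono[OF stk_mono[OF V(3)]])
  moreover have "X closure_of stk k (\<Union>\<V>) \<U> \<subseteq> topspace X" by (rule closure_of_subset_topspace)
  ultimately have "X closure_of stk k (\<Union>\<V>) \<U> = topspace X" using B(4) by simp
  then show "\<exists>k\<ge>1. \<exists>\<V>\<subseteq>\<U>. countable \<V> \<and> X closure_of stk k (\<Union>\<V>) \<U> = topspace X" using V(1,2) B(1) by blast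
qed

lemma kL_sSk: "k_star_lindelof k X \<Longrightarrow> strongly_k_star_lindelof (Suc k) X"
  unfolding strongly_k_star_lindelof_def k_star_lindelof_def
proof (intro allI impI)
  fix \<U> assume H: "\<forall>\<U>. open_cover X \<U> \<longrightarrow> (\<exists>\<V>\<subseteq>\<U>. countable \<V> \<and> stk k (\<Union>\<V>) \<U> = topspace X)"
    and C: "open_cover X \<U>"
  obtain \<V> where V: "\<V> \<subseteq> \<U>" "countable \<V>" "stk k (\<Union>\<V>) \<U> = topspace X" using H C by blast
  obtain B where B: "B \<subseteq> topspace X" "countable B" "\<Union>\<V> \<subseteq> stk (Suc 0) B \<U>"
    using sets_to_points[OF C V(1,2)] by (elim exE conjE) assumption
  have "stk k (\<Union>\<V>) \<U> \<subseteq> stk k (stk (Suc 0) B \<U>) \<U>" by (rule stk_mono[OF B(3)])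
  also have "\<dots> = stk (k + Suc 0) B \<U>" by (rule stk_comp)
  also have "\<dots> = stk (Suc k) B \<U>" by (simp only: add_Suc_right add_0_right)
  finally have "stk k (\<Union>\<V>) \<U> \<subseteq> stk (Suc k) B \<U>" .
  then have "topspace X \<subseteq> stk (Suc k) B \<U>" using V(3) by (simp only:)
  moreover have "stk (Suc k) B \<U> \<subseteq> topspace X" by (rule stk_sub[OF C])
  ultimately have "stk (Suc k) B \<U> = topspace X" by (rule antisym[rotated])
  then show "\<exists>B\<subseteq>topspace X. countable B \<and> stk (Suc k) B \<U> = topspace X" using B(1,2) by blast
qed

lemma wk_wsSk: "weakly_k_star_lindelof k X \<Longrightarrow> weakly_strongly_k_star_lindelof (Suc k) X"
  unfolding weakly_strongly_k_star_lindelof_def weakly_k_star_lindelof_def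
proof (intro allI impI)
  fix \<U> assume H: "\<forall>\<U>. open_cover X \<U> \<longrightarrow> (\<exists>\<V>\<subseteq>\<U>. countable \<V> \<and> X closure_of stk k (\<Union>\<V>) \<U> = topspace X)"
    and C: "open_cover X \<U>"
  obtain \<V> where V: "\<V> \<subseteq> \<U>" "countable \<V>" "X closure_of stk k (\<Union>\<V>) \<U> = topspace X" using H C by blast
  obtain B where B: "B \<subseteq> topspace X" "countable B" "\<Union>\<V> \<subseteq> stk (Suc 0) B \<U>"
    using sets_to_points[OF C V(1,2)] by (elim exE conjE) assumption
  have "stk k (\<Union>\<V>) \<U> \<subseteq> stk k (stk (Suc 0) B \<U>) \<U>" by (rule stk_mono[OF B(3)])
  also have "\<dots> = stk (k + Suc 0) B \<U>" by (rule stk_comp)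
  also have "\<dots> = stk (Suc k) B \<U>" by (simp only: add_Suc_right add_0_right)
  finally have "X closure_of stk k (\<Union>\<V>) \<U> \<subseteq> X closure_of stk (Suc k) B \<U>" by (rule closure_of_mono)
  then have "topspace X \<subseteq> X closure_of stk (Suc k) B \<U>" using V(3) by simp
  moreover have "X closure_of stk (Suc k) B \<U> \<subseteq> topspace X" by (rule closure_of_subset_topspace)
  ultimately have "X closure_of stk (Suc k) B \<U> = topspace X" by simp
  then show "\<exists>B\<subseteq>topspace X. countable B \<and> X closure_of stk (Suc k) B \<U> = topspace X" using B(1,2) by blast
qed



lemma maximal_refining:
  assumes C: "open_cover X \<U>"
  shows "\<exists>M. maximal_disjoint_open_family X M \<and> (\<forall>G\<in>M. G = {} \<or> (\<exists>U\<in>\<U>. G \<subseteq> U))"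
proof -
  let ?S = "{G. openin X G \<and> (G = {} \<or> (\<exists>U\<in>\<U>. G \<subseteq> U))}"
  have "\<exists>M \<subseteq> ?S. pairwise disjnt M \<and> (\<forall>x\<in>?S. x \<notin> M \<longrightarrow> (\<exists>y\<in>M. \<not> disjnt x y))"
    by (rule pairwise_maximal) (simp add: disjnt_sym)
  then obtain M where MS: "M \<subseteq> ?S" and pw: "pairwise disjnt M"
    and mx: "\<forall>x\<in>?S. x \<notin> M \<longrightarrow> (\<exists>y\<in>M. \<not> disjnt x y)" by (elim exE conjE)
  have dM: "disjoint_open_family X M" using MS pw unfolding disjoint_open_family_def by auto
  have "\<B> = M" if B: "disjoint_open_family X \<B>" "M \<subseteq> \<B>" for \<B>
  proof (rule ccontr)
    assume "\<B> \<noteq> M"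
    then obtain G where G: "G \<in> \<B>" "G \<notin> M" using B(2) by blast
    have Go: "openin X G" using B(1) G(1) unfolding disjoint_open_family_def by blast
    have pB: "pairwise disjnt \<B>" using B(1) unfolding disjoint_open_family_def by blast
    show False
    proof (cases "G = {}")
      case True
      then have "G \<in> ?S" by simp
      then obtain y where "y \<in> M" "\<not> disjnt G y" using mx G(2) by blast
      then show False using True by simp
    next
      case False
      then obtain x where x: "x \<in> G" by blast
      then have "x \<in> topspace X" using Go openin_subset by blast
      then obtain U where U: "U \<in> \<U>" "x \<in> U" using cover_pt[OF C] by blast
      have G'o: "openin X (G \<inter> U)" using Go open_cover_open[OF C U(1)] by blast
      then have G'S: "G \<inter> U \<in> ?S" using U by blast
      show False
      proof (cases "G \<inter> U \<in> M")
        case True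
        then have "G \<inter> U \<in> \<B>" "G \<inter> U \<noteq> G" using B(2) G(2) by auto
        then have "disjnt G (G \<inter> U)" using pB G(1) unfolding pairwise_def by metis
        then show False using x U by (auto simp: disjnt_def)
      next
        case False
        then obtain y where y: "y \<in> M" "\<not> disjnt (G \<inter> U) y" using mx G'S by blast
        then have "y \<in> \<B>" "y \<noteq> G" using B(2) G(2) by auto
        then have "disjnt G y" using pB G(1) unfolding pairwise_def by metis
        then show False using y(2) by (auto simp: disjnt_def)
      qed
    qed
  qed
  then have "maximal_disjoint_open_family X M" using dM unfolding maximal_disjoint_open_family_def by blast
  moreover have "\<forall>G\<in>M. G = {} \<or> (\<exists>U\<in>\<U>. G \<subseteq> U)" using MS by blast
  ultimately show ?thesis by blast
qed

lemma selo_oL: "selectively_omega_star_ccc X \<Longrightarrow> omega_star_lindelof X"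
  unfolding omega_star_lindelof_def
proof (intro allI impI)
  fix \<U> assume H: "selectively_omega_star_ccc X" and C: "open_cover X \<U>"
  obtain M where M: "maximal_disjoint_open_family X M" and Mr: "\<forall>G\<in>M. G = {} \<or> (\<exists>U\<in>\<U>. G \<subseteq> U)"
    using maximal_refining[OF C] by (elim exE conjE)
  have "\<exists>k\<ge>1. \<exists>A::nat \<Rightarrow> 'a set. (\<forall>n. A n \<in> M) \<and> stk k (\<Union>n. A n) \<U> = topspace X"
    using H[unfolded selectively_omega_star_ccc_def, THEN spec[where x=\<U>], THEN spec[where x="\<lambda>n. M"]] C M by simp
  then obtain k and A :: "nat \<Rightarrow> 'a set" where k: "k \<ge> 1" and A: "\<forall>n. A n \<in> M" and st: "stk k (\<Union>n. A n) \<U> = topspace X"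
    by auto
  define f where "f G = (SOME U. U \<in> \<U> \<and> G \<subseteq> U)" for G
  have f: "f G \<in> \<U> \<and> G \<subseteq> f G" if "G \<in> M" "G \<noteq> {}" for G
    using Mr that unfolding f_def by (metis (mono_tags, lifting) someI)
  let ?V = "f ` (range A - {{}})"
  have "?V \<subseteq> \<U>"
  proof
    fix U assume "U \<in> ?V"
    then obtain G where "G \<in> range A" "G \<noteq> {}" "U = f G" by auto
    then show "U \<in> \<U>" using f A by auto
  qed
  moreover have "countable ?V" by simp
  moreover have "(\<Union>n. A n) \<subseteq> \<Union>?V"
  proof
    fix x assume "x \<in> (\<Union>n. A n)"
    then obtain n where "x \<in> A n" by blast
    then have "A n \<noteq> {}" "A n \<in> range A" by auto
    then have "f (A n) \<in> ?V" by auto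
    moreover have "x \<in> f (A n)" using f[of "A n"] A \<open>x \<in> A n\<close> \<open>A n \<noteq> {}\<close> by auto
    ultimately show "x \<in> \<Union>?V" by (rule UnionI)
  qed
  then have "stk k (\<Union>n. A n) \<U> \<subseteq> stk k (\<Union>?V) \<U>" by (rule stk_mono)
  moreover have "stk k (\<Union>?V) \<U> \<subseteq> topspace X"
    using stk_sub[OF C, of "k - 1"] k by simp
  ultimately have "stk k (\<Union>?V) \<U> = topspace X" using st by simp
  then show "\<exists>k\<ge>1. \<exists>\<V>\<subseteq>\<U>. countable \<V> \<and> stk k (\<Union>\<V>) \<U> = topspace X"
    using k \<open>?V \<subseteq> \<U>\<close> \<open>countable ?V\<close> by (intro exI[of _ k] conjI exI[of _ ?V]) auto
qed

lemma maximal_has_empty: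
  "maximal_disjoint_open_family X M \<Longrightarrow> {} \<in> M"
  unfolding maximal_disjoint_open_family_def disjoint_open_family_def
proof -
  assume a: "((\<forall>A\<in>M. openin X A) \<and> pairwise disjnt M) \<and>
    (\<forall>\<B>. ((\<forall>A\<in>\<B>. openin X A) \<and> pairwise disjnt \<B>) \<and> M \<subseteq> \<B> \<longrightarrow> \<B> = M)"
  have "pairwise disjnt (insert {} M)" using a by (auto simp: pairwise_def)
  moreover have "\<forall>A\<in>insert {} M. openin X A" using a by auto
  ultimately have "insert {} M = M" using a by blast
  then show "{} \<in> M" by blast
qed

lemma maximal_meets:
  assumes "maximal_disjoint_open_family X M" "openin X W" "W \<noteq> {}"
  shows "\<exists>A\<in>M. A \<inter> W \<noteq> {}"
proof (rule ccontr)
  assume "\<not> ?thesis"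
  then have d: "\<forall>A\<in>M. A \<inter> W = {}" by blast
  have "disjoint_open_family X (insert W M)"
    using assms d unfolding maximal_disjoint_open_family_def disjoint_open_family_def
    by (auto simp: pairwise_def disjnt_def)
  then have "insert W M = M" using assms(1) unfolding maximal_disjoint_open_family_def by blast
  then have "W \<in> M" by blast
  then show False using d assms(3) by blast
qed

lemma dccc_sel3:
  assumes D: "DCCC X" shows "selectively_k_star_ccc 3 X"
  unfolding selectively_k_star_ccc_def
proof (intro allI impI)
  fix \<U> \<A> assume H: "open_cover X \<U> \<and> (\<forall>n::nat. maximal_disjoint_open_family X (\<A> n))"
  then have C: "open_cover X \<U>" and Mx: "\<And>n. maximal_disjoint_open_family X (\<A> n)" by auto
  obtain M where Mc: "countable M" and MS: "\<forall>W\<in>M. openin X W \<and> W \<noteq> {} \<and> (\<exists>U\<in>\<U>. W \<subseteq> U)"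
    and mx: "\<forall>G. openin X G \<and> G \<noteq> {} \<and> (\<exists>U\<in>\<U>. G \<subseteq> U) \<longrightarrow>
        (\<exists>W\<in>M. \<exists>U\<in>\<U>. U \<inter> G \<noteq> {} \<and> U \<inter> W \<noteq> {})"
    using dccc_core[OF D C] by (elim exE conjE)
  have top3: "stk 3 B \<U> \<subseteq> topspace X" for B
    using stk_sub[OF C, of 2 B] by (simp add: numeral_3_eq_3)
  show "\<exists>A. (\<forall>n. A n \<in> \<A> n) \<and> stk 3 (\<Union>n. A n) \<U> = topspace X"
  proof (cases "M = {}")
    case True
    have "topspace X = {}"
    proof (rule ccontr)
      assume "topspace X \<noteq> {}"
      then obtain x where "x \<in> topspace X" by blast
      then obtain U where U: "U \<in> \<U>" "x \<in> U" using cover_pt[OF C] by blast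
      then have "openin X U" "U \<noteq> {}" using open_cover_open[OF C] by auto
      then show False using mx U True by blast
    qed
    moreover have "\<forall>n. {} \<in> \<A> n" using maximal_has_empty Mx by blast
    ultimately show ?thesis using top3[of "\<Union>n. {}"] by (intro exI[of _ "\<lambda>n. {}"]) auto
  next
    case False
    define w where "w = from_nat_into M"
    have wM: "w n \<in> M" for n using False unfolding w_def by (simp add: from_nat_into)
    have wr: "W \<in> range w" if "W \<in> M" for W
      using that Mc unfolding w_def by (metis range_from_nat_into False)
    define A where "A n = (SOME A. A \<in> \<A> n \<and> A \<inter> w n \<noteq> {})" for n
    have A: "A n \<in> \<A> n \<and> A n \<inter> w n \<noteq> {}" for n
    proof -
      have wp: "openin X (w n) \<and> w n \<noteq> {} \<and> (\<exists>U\<in>\<U>. w n \<subseteq> U)" using bspec[OF MS wM[of n]] .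
      have "\<exists>A\<in>\<A> n. A \<inter> w n \<noteq> {}"
        using wp by (intro maximal_meets[OF Mx[of n]]) simp_all
      then have "\<exists>A. A \<in> \<A> n \<and> A \<inter> w n \<noteq> {}" by (simp only: Bex_def)
      then show ?thesis unfolding A_def by (rule someI_ex)
    qed
    define f where "f W = (SOME U. U \<in> \<U> \<and> W \<subseteq> U)" for W
    have f: "f W \<in> \<U> \<and> W \<subseteq> f W" if "W \<in> M" for W
      using MS that unfolding f_def by (metis (mono_tags, lifting) someI)
    have "topspace X \<subseteq> stk 3 (\<Union>n. A n) \<U>"
    proof
      fix x assume "x \<in> topspace X"
      then obtain U where U: "U \<in> \<U>" "x \<in> U" using cover_pt[OF C] by blast
      have "openin X U \<and> U \<noteq> {} \<and> (\<exists>V\<in>\<U>. U \<subseteq> V)" using open_cover_open[OF C U(1)] U by blast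
      then have "\<exists>W\<in>M. \<exists>U'\<in>\<U>. U' \<inter> U \<noteq> {} \<and> U' \<inter> W \<noteq> {}" using mx by (rule_tac mp[OF spec[OF mx]])
      then obtain W U' where W: "W \<in> M" "U' \<in> \<U>" "U' \<inter> U \<noteq> {}" "U' \<inter> W \<noteq> {}"
        by (elim bexE conjE)
      obtain n where n: "W = w n" using wr[OF W(1)] by (elim rangeE)
      have "f W \<inter> stk 0 (\<Union>n. A n) \<U> \<noteq> {}" using A[of n] f[OF W(1)] n by auto
      then have "f W \<subseteq> stk (Suc 0) (\<Union>n. A n) \<U>" using stk_step f[OF W(1)] by blast
      then have "U' \<inter> stk (Suc 0) (\<Union>n. A n) \<U> \<noteq> {}" using W f[OF W(1)] by blast
      then have "U' \<subseteq> stk (Suc (Suc 0)) (\<Union>n. A n) \<U>" using stk_step W(2) by blast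
      then have "U \<inter> stk (Suc (Suc 0)) (\<Union>n. A n) \<U> \<noteq> {}" using W by auto
      then have "U \<subseteq> stk (Suc (Suc (Suc 0))) (\<Union>n. A n) \<U>" using stk_step U(1) by blast
      then show "x \<in> stk 3 (\<Union>n. A n) \<U>" using U by (simp add: numeral_3_eq_3 subset_iff)
    qed
    then have "stk 3 (\<Union>n. A n) \<U> = topspace X" using top3 by (rule antisym[rotated])
    moreover have "\<forall>n. A n \<in> \<A> n" using A by blast
    ultimately have "(\<forall>n. A n \<in> \<A> n) \<and> stk 3 (\<Union>n. A n) \<U> = topspace X" by (rule conjI[rotated])
    then show ?thesis by (rule exI[of _ A])
  qed
qed



lemma regular_nbhd:
  assumes R: "regular_space X" and W: "openin X W" "x \<in> W"
  shows "\<exists>U. openin X U \<and> x \<in> U \<and> X closure_of U \<subseteq> W"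
proof -
  have "closedin X (topspace X - W)" using W(1) by blast
  moreover have "x \<in> topspace X - (topspace X - W)" using W openin_subset by blast
  ultimately obtain U where U: "openin X U" "x \<in> U" "disjnt (topspace X - W) (X closure_of U)"
    using R unfolding regular_space by blast
  have "X closure_of U \<subseteq> topspace X" by (rule closure_of_subset_topspace)
  then have "X closure_of U \<subseteq> W" using U(3) by (auto simp: disjnt_def)
  then show ?thesis using U by blast
qed

fun shrink :: "'a topology \<Rightarrow> 'a \<Rightarrow> 'a set \<Rightarrow> nat \<Rightarrow> 'a set" where
  "shrink X x A 0 = A"
| "shrink X x A (Suc j) = (SOME U. openin X U \<and> x \<in> U \<and> X closure_of U \<subseteq> shrink X x A j)"

lemma shrink_props:
  assumes R: "regular_space X" and A: "openin X A" "x \<in> A"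
  shows "openin X (shrink X x A j) \<and> x \<in> shrink X x A j \<and> X closure_of (shrink X x A (Suc j)) \<subseteq> shrink X x A j"
proof (induction j)
  case 0
  have "\<exists>U. openin X U \<and> x \<in> U \<and> X closure_of U \<subseteq> shrink X x A 0"
    using regular_nbhd[OF R A] by simp
  then have "openin X (shrink X x A (Suc 0)) \<and> x \<in> shrink X x A (Suc 0) \<and> X closure_of (shrink X x A (Suc 0)) \<subseteq> shrink X x A 0"
    unfolding shrink.simps(2) by (rule someI_ex)
  then show ?case using A by simp
next
  case (Suc j)
  have o: "openin X (shrink X x A (Suc j)) \<and> x \<in> shrink X x A (Suc j)"
  proof -
    have "\<exists>U. openin X U \<and> x \<in> U \<and> X closure_of U \<subseteq> shrink X x A j"
      using regular_nbhd[OF R] Suc.IH by blast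
    then show ?thesis unfolding shrink.simps(2) by (rule someI2_ex) blast
  qed
  have "\<exists>U. openin X U \<and> x \<in> U \<and> X closure_of U \<subseteq> shrink X x A (Suc j)"
    using regular_nbhd[OF R] o by blast
  then have "X closure_of (shrink X x A (Suc (Suc j))) \<subseteq> shrink X x A (Suc j)"
    unfolding shrink.simps(2)[of X x A "Suc j"] by (rule someI2_ex) blast
  then show ?case using o by blast
qed

lemma shrink_anti:
  assumes R: "regular_space X" and A: "openin X A" "x \<in> A" and ij: "i \<le> j"
  shows "shrink X x A j \<subseteq> shrink X x A i"
  using ij
proof (induction j)
  case 0 then show ?case by simp
next
  case (Suc j)
  have "shrink X x A (Suc j) \<subseteq> X closure_of shrink X x A (Suc j)"
    using shrink_props[OF R A, of "Suc j"] by (simp add: closure_of_subset openin_subset)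
  also have "\<dots> \<subseteq> shrink X x A j" using shrink_props[OF R A, of j] by blast
  finally have s: "shrink X x A (Suc j) \<subseteq> shrink X x A j" .
  show ?case
  proof (cases "i = Suc j")
    case True then show ?thesis by simp
  next
    case False then have "i \<le> j" using Suc.prems by simp
    then show ?thesis using Suc.IH s by blast
  qed
qed

unbundle cardinal_syntax

lemma uncountable_split:
  assumes "\<not> countable S"
  shows "\<exists>d::'a \<Rightarrow> nat. \<forall>m. \<not> countable {a\<in>S. d a = m}"
proof -
  have inf: "\<not> finite S" using assms countable_finite by blast
  have le: "|UNIV::nat set| \<le>o |S|" using inf infinite_iff_card_of_nat by auto
  have "|S \<times> (UNIV::nat set)| =o |S|"
    using card_of_Times_infinite[OF inf _ le] by simp
  then have "|S| =o |S \<times> (UNIV::nat set)|" by (rule ordIso_symmetric)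
  then have "\<exists>h. bij_betw h S (S \<times> (UNIV::nat set))" by (simp only: card_of_ordIso[symmetric])
  then obtain h where h: "bij_betw h S (S \<times> (UNIV::nat set))" by (elim exE)
  have "\<not> countable {a\<in>S. snd (h a) = m}" for m
  proof
    assume c: "countable {a\<in>S. snd (h a) = m}"
    have "S \<times> {m} \<subseteq> h ` {a\<in>S. snd (h a) = m}"
    proof
      fix p assume p: "p \<in> S \<times> {m}"
      then have "p \<in> h ` S" using h unfolding bij_betw_def by auto
      then obtain a where "a \<in> S" "h a = p" by blast
      then show "p \<in> h ` {a\<in>S. snd (h a) = m}" using p by auto
    qed
    moreover have "countable (h ` {a\<in>S. snd (h a) = m})" using c by simp
    ultimately have "countable (S \<times> {m})" by (rule countable_subset)
    then have "countable (fst ` (S \<times> {m}))" by (rule countable_image)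
    moreover have "fst ` (S \<times> {m}) = S" by force
    ultimately show False using assms by simp
  qed
  then show ?thesis by (intro exI[of _ "\<lambda>a. snd (h a)"]) simp
qed



lemma reach_lemma:
  assumes "x \<in> W 0" "\<forall>j<n. x \<in> W j \<longrightarrow> x \<in> W (Suc j)"
  shows "x \<in> W n"
  using assms by (induction n) auto

lemma subsingleton_finite:
  assumes "\<And>a b. a \<in> S \<Longrightarrow> b \<in> S \<Longrightarrow> a = b"
  shows "finite S"
proof (cases "S = {}")
  case True then show ?thesis by simp
next
  case False
  then obtain a where "a \<in> S" by blast
  then have "S \<subseteq> {a}" using assms by blast
  then show ?thesis using finite_subset by blast
qed

lemma wo_dccc:
  assumes R: "regular_space X" and Wk: "weakly_omega_star_lindelof X"
  shows "DCCC X"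
  unfolding DCCC_def
proof (intro allI impI)
  fix \<A> assume H: "(\<forall>A\<in>\<A>. openin X A) \<and> discrete_family X \<A>"
  then have op: "\<And>A. A \<in> \<A> \<Longrightarrow> openin X A" and disc: "discrete_family X \<A>" by auto
  show "countable \<A>"
  proof (rule ccontr)
    assume unc: "\<not> countable \<A>"
    define \<A>' where "\<A>' = \<A> - {{}}"
    have unc': "\<not> countable \<A>'"
    proof
      assume "countable \<A>'"
      then have "countable (insert {} \<A>')" by simp
      moreover have "\<A> \<subseteq> insert {} \<A>'" unfolding \<A>'_def by blast
      ultimately show False using unc countable_subset by blast
    qed
    have dis: "A = B" if "A \<in> \<A>" "B \<in> \<A>" "x \<in> A" "x \<in> B" for A B x
    proof -
      have xt: "x \<in> topspace X" using op[OF that(1)] that(3) openin_subset by blast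
      obtain W where W: "openin X W" "x \<in> W"
        "\<forall>A1\<in>\<A>. \<forall>A2\<in>\<A>. A1 \<inter> W \<noteq> {} \<longrightarrow> A2 \<inter> W \<noteq> {} \<longrightarrow> A1 = A2"
        using disc[unfolded discrete_family_def, rule_format, OF xt] by (elim exE conjE)
      have "A \<inter> W \<noteq> {}" "B \<inter> W \<noteq> {}" using that W(2) by auto
      then show "A = B" using W(3) that(1,2) by blast
    qed
    obtain d :: "'a set \<Rightarrow> nat" where d: "\<forall>m. \<not> countable {A\<in>\<A>'. d A = m}" using uncountable_split[OF unc'] by (elim exE)
    define pt where "pt A = (SOME x. x \<in> A)" for A :: "'a set"
    have pt: "pt A \<in> A" if "A \<in> \<A>'" for A
      using that unfolding pt_def \<A>'_def by (simp add: some_in_eq)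
    have opA: "openin X A" if "A \<in> \<A>'" for A using op that unfolding \<A>'_def by blast
    define Ws where "Ws A j = shrink X (pt A) A j" for A j
    have Wp: "openin X (Ws A j) \<and> pt A \<in> Ws A j \<and> X closure_of (Ws A (Suc j)) \<subseteq> Ws A j"
      if "A \<in> \<A>'" for A j
      unfolding Ws_def by (rule shrink_props[OF R opA[OF that] pt[OF that]])
    have Wanti: "Ws A j \<subseteq> Ws A i" if "A \<in> \<A>'" "i \<le> j" for A i j
      unfolding Ws_def by (rule shrink_anti[OF R opA[OF that(1)] pt[OF that(1)] that(2)])
    have W0: "Ws A 0 = A" for A unfolding Ws_def by simp
    have Wsub: "Ws A j \<subseteq> A" if "A \<in> \<A>'" for A j using Wanti[OF that, of 0 j] W0 by simp
    have Wcl: "Ws A j \<subseteq> X closure_of Ws A j" if "A \<in> \<A>'" for A j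
      using Wp[OF that, of j] by (simp add: closure_of_subset openin_subset)
    have clsub: "X closure_of Ws A 1 \<subseteq> A" if "A \<in> \<A>'" for A
      using Wp[OF that, of 0] W0 by simp
    define P where "P A j = (if j < d A then Ws A j - X closure_of Ws A (Suc (Suc j)) else Ws A (d A))" for A j
    define F where "F = \<Union>((\<lambda>A. X closure_of Ws A 1) ` \<A>')"
    define G0 where "G0 = topspace X - F"
    define \<U> where "\<U> = insert G0 ((\<lambda>(A,j). P A j) ` (\<A>' \<times> UNIV))"
    have Psub: "P A j \<subseteq> A" if "A \<in> \<A>'" for A j
      unfolding P_def using Wsub[OF that] by auto
    have Popen: "openin X (P A j)" if "A \<in> \<A>'" for A j
      unfolding P_def using Wp[OF that] by auto
    have lf: "locally_finite_in X ((\<lambda>A. X closure_of Ws A 1) ` \<A>')"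
      unfolding locally_finite_in_def
    proof (intro conjI ballI)
      show "\<Union>((\<lambda>A. X closure_of Ws A 1) ` \<A>') \<subseteq> topspace X"
        by (simp add: UN_least closure_of_subset_topspace)
      fix x assume xt: "x \<in> topspace X"
      obtain W where W: "openin X W" "x \<in> W"
        "\<forall>A1\<in>\<A>. \<forall>A2\<in>\<A>. A1 \<inter> W \<noteq> {} \<longrightarrow> A2 \<inter> W \<noteq> {} \<longrightarrow> A1 = A2"
        using disc[unfolded discrete_family_def, rule_format, OF xt] by (elim exE conjE)
      have "finite {A\<in>\<A>'. A \<inter> W \<noteq> {}}"
        by (rule subsingleton_finite) (use W(3) in \<open>auto simp: \<A>'_def\<close>)
      then have fin: "finite ((\<lambda>A. X closure_of Ws A 1) ` {A\<in>\<A>'. A \<inter> W \<noteq> {}})" by simp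
      have "{U \<in> (\<lambda>A. X closure_of Ws A 1) ` \<A>'. U \<inter> W \<noteq> {}} \<subseteq> (\<lambda>A. X closure_of Ws A 1) ` {A\<in>\<A>'. A \<inter> W \<noteq> {}}"
      proof
        fix U assume "U \<in> {U \<in> (\<lambda>A. X closure_of Ws A 1) ` \<A>'. U \<inter> W \<noteq> {}}"
        then obtain A where A: "A \<in> \<A>'" "U = X closure_of Ws A 1" "U \<inter> W \<noteq> {}" by blast
        then have "A \<inter> W \<noteq> {}" using clsub[OF A(1)] by blast
        then show "U \<in> (\<lambda>A. X closure_of Ws A 1) ` {A\<in>\<A>'. A \<inter> W \<noteq> {}}" using A by blast
      qed
      then have "finite {U \<in> (\<lambda>A. X closure_of Ws A 1) ` \<A>'. U \<inter> W \<noteq> {}}" using fin finite_subset by blast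
      then show "\<exists>V. openin X V \<and> x \<in> V \<and> finite {U \<in> (\<lambda>A. X closure_of Ws A 1) ` \<A>'. U \<inter> V \<noteq> {}}"
        using W(1,2) by blast
    qed
    have "closedin X F" unfolding F_def
      by (rule closedin_locally_finite_Union[OF _ lf]) auto
    then have G0o: "openin X G0" unfolding G0_def by blast
    have Uopen: "openin X U" if "U \<in> \<U>" for U
      using that G0o Popen unfolding \<U>_def by auto
    have cov: "topspace X \<subseteq> \<Union>\<U>"
    proof
      fix x assume x: "x \<in> topspace X"
      show "x \<in> \<Union>\<U>"
      proof (cases "x \<in> F")
        case False
        then have "x \<in> G0" using x unfolding G0_def by blast
        then show ?thesis unfolding \<U>_def by blast
      next
        case True
        then obtain A where A: "A \<in> \<A>'" "x \<in> X closure_of Ws A 1" unfolding F_def by blast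
        then have xA: "x \<in> Ws A 0" using clsub W0 by blast
        have "\<exists>j. x \<in> P A j"
        proof (cases "\<exists>j<d A. x \<in> Ws A j \<and> x \<notin> Ws A (Suc j)")
          case True
          then obtain j where j: "j < d A" "x \<in> Ws A j" "x \<notin> Ws A (Suc j)" by blast
          have "X closure_of Ws A (Suc (Suc j)) \<subseteq> Ws A (Suc j)" using Wp[OF A(1)] by blast
          then have "x \<in> P A j" unfolding P_def using j by auto
          then show ?thesis by blast
        next
          case False
          then have "x \<in> Ws A (d A)" using reach_lemma[of x "Ws A" "d A"] xA by blast
          then have "x \<in> P A (d A)" unfolding P_def by simp
          then show ?thesis by blast
        qed
        then obtain j where "x \<in> P A j" by blast
        moreover have "P A j \<in> \<U>" unfolding \<U>_def using A(1) by blast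
        ultimately show ?thesis by blast
      qed
    qed
    have oc: "open_cover X \<U>"
      unfolding open_cover_def
    proof
      show "\<forall>U\<in>\<U>. openin X U" using Uopen by blast
      have "\<Union>\<U> \<subseteq> topspace X" using Uopen openin_subset by blast
      then show "\<Union>\<U> = topspace X" using cov by (rule antisym)
    qed
    obtain k \<V> where k: "k \<ge> 1" and V: "\<V> \<subseteq> \<U>" "countable \<V>"
      and dense: "X closure_of stk k (\<Union>\<V>) \<U> = topspace X"
      using Wk oc unfolding weakly_omega_star_lindelof_def by blast
    have sub1: "A = B" if h: "V \<in> \<U>" "A \<in> \<A>'" "B \<in> \<A>'" "V \<inter> Ws A 1 \<noteq> {}" "V \<inter> Ws B 1 \<noteq> {}" for V A B
    proof (cases "V = G0")
      case True
      have "Ws A 1 \<subseteq> F" using Wcl[OF h(2), of 1] h(2) unfolding F_def by blast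
      then have False using h(4) True unfolding G0_def by blast
      then show ?thesis by blast
    next
      case False
      then obtain C j where C: "C \<in> \<A>'" "V = P C j" using h(1) unfolding \<U>_def by auto
      obtain x where x: "x \<in> V" "x \<in> Ws A 1" using h(4) by blast
      obtain y where y: "y \<in> V" "y \<in> Ws B 1" using h(5) by blast
      have "C \<in> \<A>" "A \<in> \<A>" "B \<in> \<A>" using C(1) h(2,3) unfolding \<A>'_def by auto
      moreover have "x \<in> C" "y \<in> C" using x(1) y(1) C Psub by blast+
      moreover have "x \<in> A" "y \<in> B" using x(2) y(2) Wsub h(2,3) by blast+
      ultimately have "C = A" "C = B" using dis by metis+
      then show ?thesis by simp
    qed
    define T where "T = {A\<in>\<A>'. \<Union>\<V> \<inter> Ws A 1 \<noteq> {}}"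
    have "T \<subseteq> (\<Union>V\<in>\<V>. {A\<in>\<A>'. V \<inter> Ws A 1 \<noteq> {}})" unfolding T_def by blast
    moreover have "countable (\<Union>V\<in>\<V>. {A\<in>\<A>'. V \<inter> Ws A 1 \<noteq> {}})"
    proof (rule countable_UN[OF V(2)])
      fix V assume "V \<in> \<V>"
      then have "V \<in> \<U>" using V(1) by blast
      then have "finite {A\<in>\<A>'. V \<inter> Ws A 1 \<noteq> {}}"
        by (intro subsingleton_finite) (use sub1 in blast)
      then show "countable {A\<in>\<A>'. V \<inter> Ws A 1 \<noteq> {}}" by (rule countable_finite)
    qed
    ultimately have Tc: "countable T" by (rule countable_subset)
    have "\<not> {A\<in>\<A>'. d A = k} \<subseteq> T" using d Tc countable_subset by blast
    then obtain \<alpha> where \<alpha>: "\<alpha> \<in> \<A>'" "d \<alpha> = k" "\<alpha> \<notin> T" by blast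
    have inv: "stk m (\<Union>\<V>) \<U> \<inter> Ws \<alpha> (Suc m) = {}" if "m \<le> k" for m
      using that
    proof (induction m)
      case 0
      then show ?case using \<alpha> unfolding T_def by simp
    next
      case (Suc m)
      have IH: "stk m (\<Union>\<V>) \<U> \<inter> Ws \<alpha> (Suc m) = {}" using Suc by simp
      show ?case
      proof (rule ccontr)
        assume "\<not> ?case"
        then obtain x where x: "x \<in> stk (Suc m) (\<Union>\<V>) \<U>" "x \<in> Ws \<alpha> (Suc (Suc m))" by blast
        then obtain U where U: "U \<in> \<U>" "x \<in> U" "U \<inter> stk m (\<Union>\<V>) \<U> \<noteq> {}" by auto
        have x1: "x \<in> Ws \<alpha> 1" using Wanti[OF \<alpha>(1), of 1 "Suc (Suc m)"] x(2) by auto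
        show False
        proof (cases "U = G0")
          case True
          have "Ws \<alpha> 1 \<subseteq> F" using Wcl[OF \<alpha>(1), of 1] \<alpha>(1) unfolding F_def by blast
          then show False using x1 U(2) True unfolding G0_def by blast
        next
          case False
          then obtain C j where C: "C \<in> \<A>'" "U = P C j" using U(1) unfolding \<U>_def by auto
          have "x \<in> C" using C Psub U(2) by blast
          moreover have "x \<in> \<alpha>" using Wsub[OF \<alpha>(1)] x(2) by blast
          moreover have "C \<in> \<A>" "\<alpha> \<in> \<A>" using C(1) \<alpha>(1) unfolding \<A>'_def by auto
          ultimately have Ca: "C = \<alpha>" using dis by metis
          have "U \<subseteq> Ws \<alpha> (Suc m)"
          proof (cases "j < k")
            case True
            then have Ueq: "U = Ws \<alpha> j - X closure_of Ws \<alpha> (Suc (Suc j))" using C(2) Ca \<alpha>(2) unfolding P_def by simp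
            show ?thesis
            proof (cases "j \<le> m")
              case True
              have "x \<in> Ws \<alpha> (Suc (Suc j))" using Wanti[OF \<alpha>(1), of "Suc (Suc j)" "Suc (Suc m)"] True x(2) by auto
              then have "x \<in> X closure_of Ws \<alpha> (Suc (Suc j))" using Wcl[OF \<alpha>(1)] by blast
              then have False using U(2) Ueq by blast
              then show ?thesis by blast
            next
              case False
              then have "Suc m \<le> j" by simp
              then have "Ws \<alpha> j \<subseteq> Ws \<alpha> (Suc m)" using Wanti[OF \<alpha>(1)] by blast
              then show ?thesis using Ueq by blast
            qed
          next
            case False
            then have "U = Ws \<alpha> k" using C(2) Ca \<alpha>(2) unfolding P_def by simp
            moreover have "Ws \<alpha> k \<subseteq> Ws \<alpha> (Suc m)" using Wanti[OF \<alpha>(1)] Suc.prems by blast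
            ultimately show ?thesis by blast
          qed
          then show False using IH U(3) by blast
        qed
      qed
    qed
    have "stk k (\<Union>\<V>) \<U> \<inter> Ws \<alpha> (Suc k) = {}" using inv by simp
    then have "Ws \<alpha> (Suc k) \<inter> X closure_of stk k (\<Union>\<V>) \<U> = {}"
      using openin_Int_closure_of_eq_empty[of X "Ws \<alpha> (Suc k)" "stk k (\<Union>\<V>) \<U>"] Wp[OF \<alpha>(1)] by blast
    moreover have "pt \<alpha> \<in> Ws \<alpha> (Suc k)" using Wp[OF \<alpha>(1)] by blast
    moreover have "pt \<alpha> \<in> topspace X" using pt[OF \<alpha>(1)] opA[OF \<alpha>(1)] openin_subset by blast
    ultimately show False using dense by blast
  qed
qed


theorem corollary7:
  fixes X :: "'a topology"
  assumes "regular_space X"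
  shows "(DCCC X \<longleftrightarrow> selectively_k_star_ccc 3 X)
       \<and> (DCCC X \<longleftrightarrow> selectively_omega_star_ccc X)
       \<and> (DCCC X \<longleftrightarrow> weakly_k_star_lindelof 1 X)
       \<and> (DCCC X \<longleftrightarrow> weakly_omega_star_lindelof X)
       \<and> (DCCC X \<longleftrightarrow> weakly_strongly_k_star_lindelof 2 X)
       \<and> (DCCC X \<longleftrightarrow> weakly_strongly_omega_star_lindelof X)
       \<and> (DCCC X \<longleftrightarrow> k_star_lindelof 2 X)
       \<and> (DCCC X \<longleftrightarrow> omega_star_lindelof X)
       \<and> (DCCC X \<longleftrightarrow> strongly_k_star_lindelof 3 X)
       \<and> (DCCC X \<longleftrightarrow> strongly_omega_star_lindelof X)"
proof -
  have e2: "Suc 1 = (2::nat)" by simp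
  have e3: "Suc 2 = (3::nat)" by simp
  have one3: "(1::nat) \<le> 3" and one2: "(1::nat) \<le> 2" and one1: "(1::nat) \<le> 1" by simp_all
  have bk: "weakly_omega_star_lindelof X \<Longrightarrow> DCCC X" by (rule wo_dccc[OF assms])
  have oL: "omega_star_lindelof X \<Longrightarrow> DCCC X" by (rule bk[OF oL_wo])
  have sel3: "DCCC X \<Longrightarrow> selectively_k_star_ccc 3 X" by (rule dccc_sel3)
  have selo: "selectively_omega_star_ccc X \<Longrightarrow> DCCC X" by (rule oL[OF selo_oL])
  have selo2: "selectively_k_star_ccc 3 X \<Longrightarrow> selectively_omega_star_ccc X" by (rule selk_selo[OF one3])
  have w1: "DCCC X \<Longrightarrow> weakly_k_star_lindelof 1 X" by (rule dccc_w1)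
  have w1o: "weakly_k_star_lindelof 1 X \<Longrightarrow> weakly_omega_star_lindelof X" by (rule wk_wo[OF one1])
  have ws2: "DCCC X \<Longrightarrow> weakly_strongly_k_star_lindelof 2 X"
    using wk_wsSk[of 1 X, unfolded e2] w1 by blast
  have ws2o: "weakly_strongly_k_star_lindelof 2 X \<Longrightarrow> weakly_strongly_omega_star_lindelof X"
    by (rule wsk_wso[OF one2])
  have wso: "weakly_strongly_omega_star_lindelof X \<Longrightarrow> weakly_omega_star_lindelof X" by (rule wso_wo)
  have L2: "DCCC X \<Longrightarrow> k_star_lindelof 2 X" by (rule dccc_2L)
  have L2o: "k_star_lindelof 2 X \<Longrightarrow> omega_star_lindelof X" by (rule kL_oL[OF one2])
  have s3: "k_star_lindelof 2 X \<Longrightarrow> strongly_k_star_lindelof 3 X"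
    using kL_sSk[of 2 X, unfolded e3] by blast
  have s3o: "strongly_k_star_lindelof 3 X \<Longrightarrow> strongly_omega_star_lindelof X" by (rule sk_so[OF one3])
  have so: "strongly_omega_star_lindelof X \<Longrightarrow> omega_star_lindelof X" by (rule so_oL)
  show ?thesis
  proof (intro conjI iffI)
    show "selectively_k_star_ccc 3 X" if "DCCC X" using sel3 that by blast
    show "DCCC X" if "selectively_k_star_ccc 3 X" using selo selo2 that by blast
    show "selectively_omega_star_ccc X" if "DCCC X" using sel3 selo2 that by blast
    show "DCCC X" if "selectively_omega_star_ccc X" using selo that by blast
    show "weakly_k_star_lindelof 1 X" if "DCCC X" using w1 that by blast
    show "DCCC X" if "weakly_k_star_lindelof 1 X" using bk w1o that by blast
    show "weakly_omega_star_lindelof X" if "DCCC X" using w1 w1o that by blast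
    show "DCCC X" if "weakly_omega_star_lindelof X" using bk that by blast
    show "weakly_strongly_k_star_lindelof 2 X" if "DCCC X" using ws2 that by blast
    show "DCCC X" if "weakly_strongly_k_star_lindelof 2 X" using bk wso ws2o that by blast
    show "weakly_strongly_omega_star_lindelof X" if "DCCC X" using ws2 ws2o that by blast
    show "DCCC X" if "weakly_strongly_omega_star_lindelof X" using bk wso that by blast
    show "k_star_lindelof 2 X" if "DCCC X" using L2 that by blast
    show "DCCC X" if "k_star_lindelof 2 X" using oL L2o that by blast
    show "omega_star_lindelof X" if "DCCC X" using L2 L2o that by blast
    show "DCCC X" if "omega_star_lindelof X" using oL that by blast
    show "strongly_k_star_lindelof 3 X" if "DCCC X" using L2 s3 that by blast
    show "DCCC X" if "strongly_k_star_lindelof 3 X" using oL so s3o that by blast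
    show "strongly_omega_star_lindelof X" if "DCCC X" using L2 s3 s3o that by blast
    show "DCCC X" if "strongly_omega_star_lindelof X" using oL so that by blast
  qed
qed

end
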